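(* For $q\ge 1$, the bivariate generating function $W_q(x,y)=\sum_{n,k\ge0}w_{n,k}x^ny^k$, where $w_{n,k}$ is the number of $q$-decreasing binary words of length $n$ containing exactly $k$ letters $1$, is $$W_q(x,y)=\frac{1-x^{q+1}y^q}{1-xy-x+x^{q+2}y^{q+1}}.$$
   Context: For $q\ge1$, a binary word is $q$-decreasing if for every maximal run of $0$s, of length $a>0$, together with the (possibly empty) maximal run of $1$s immediately following it, of length $b$, one has $q\cdot a>b$. The empty word counts as the unique word of length $0$. *)

theory Defs
  imports "HOL-Computational_Algebra.Formal_Power_Series"
begin

text \<open>Binary words are lists of booleans: False is the letter 0, True the letter 1.\<close>

definition zero_run_start :: "bool list \<Rightarrow> nat \<Rightarrow> bool" where
  "zero_run_start w i \<longleftrightarrow> i < length w \<and> \<not> w ! i \<and> (i = 0 \<or> w ! (i - 1))"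

definition q_decreasing :: "nat \<Rightarrow> bool list \<Rightarrow> bool" where
  "q_decreasing q w \<longleftrightarrow>
     (\<forall>i. zero_run_start w i \<longrightarrow>
        (let a = length (takeWhile (\<lambda>c. \<not> c) (drop i w));
             b = length (takeWhile (\<lambda>c. c) (drop (i + a) w))
         in q * a > b))"

definition w_count :: "nat \<Rightarrow> nat \<Rightarrow> nat \<Rightarrow> nat" where
  "w_count q n k = card {w :: bool list. length w = n \<and> length (filter (\<lambda>c. c) w) = k
                                         \<and> q_decreasing q w}"

text \<open>Bivariate generating function as a power series in x whose coefficients are
  power series in y.\<close>
definition W_gf :: "nat \<Rightarrow> int fps fps" where
  "W_gf q = Abs_fps (\<lambda>n. Abs_fps (\<lambda>k. int (w_count q n k)))"

abbreviation X_var :: "int fps fps" where "X_var \<equiv> fps_X"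
abbreviation Y_var :: "int fps fps" where "Y_var \<equiv> fps_const fps_X"

end

theory Submission
  imports Defs
begin

definition cnd :: "nat \<Rightarrow> bool list \<Rightarrow> bool" where
  "cnd q r = (length (takeWhile (\<lambda>c. c) (drop (length (takeWhile (\<lambda>c. \<not> c) r)) r))
              < q * length (takeWhile (\<lambda>c. \<not> c) r))"

lemma qdec_alt: "q_decreasing q w \<longleftrightarrow> (\<forall>i<length w. \<not> w ! i \<and> (i = 0 \<or> w ! (i - 1)) \<longrightarrow> cnd q (drop i w))"
  unfolding q_decreasing_def zero_run_start_def cnd_def Let_def
  by (auto simp: drop_drop add.commute)

lemma tw_repF: "takeWhile (\<lambda>c. \<not> c) (replicate a False @ ys) = replicate a False @ takeWhile (\<lambda>c. \<not> c) ys"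
  by (induction a) auto
lemma tw_repT: "takeWhile (\<lambda>c. c) (replicate a True @ ys) = replicate a True @ takeWhile (\<lambda>c. c) ys"
  by (induction a) auto

lemma cnd_explicit:
  assumes "a \<ge> 1" "t = [] \<or> \<not> hd t" "b = 0 \<longrightarrow> t = []"
  shows "cnd q (replicate a False @ replicate b True @ t) = (b < q * a)"
proof -
  have t1: "takeWhile (\<lambda>c. \<not> c) (replicate a False @ replicate b True @ t) = replicate a False"
    using assms by (cases b; cases t) (auto simp: tw_repF)
  have t2: "takeWhile (\<lambda>c. c) (replicate b True @ t) = replicate b True"
    using assms by (cases t) (auto simp: tw_repT)
  show ?thesis unfolding cnd_def t1 using t2 by simp
qed

lemma decomp:
  assumes "r \<noteq> []" "\<not> hd r"
  shows "\<exists>a b t. r = replicate a False @ replicate b True @ t \<and> a \<ge> 1 \<and> (t = [] \<or> \<not> hd t) \<and> (b = 0 \<longrightarrow> t = [])"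
proof -
  define a where "a = length (takeWhile (\<lambda>c. \<not> c) r)"
  define s where "s = dropWhile (\<lambda>c. \<not> c) r"
  define b where "b = length (takeWhile (\<lambda>c. c) s)"
  define t where "t = dropWhile (\<lambda>c. c) s"
  have ra: "takeWhile (\<lambda>c. \<not> c) r = replicate a False"
    unfolding a_def by (rule replicate_eqI) (auto dest: set_takeWhileD)
  have sb: "takeWhile (\<lambda>c. c) s = replicate b True"
    unfolding b_def by (rule replicate_eqI) (auto dest: set_takeWhileD)
  have r: "r = replicate a False @ replicate b True @ t"
    using ra sb takeWhile_dropWhile_id[of "\<lambda>c. \<not> c" r] takeWhile_dropWhile_id[of "\<lambda>c. c" s]
    unfolding s_def t_def by metis
  have a1: "a \<ge> 1" using assms unfolding a_def by (cases r) auto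
  have ht: "t = [] \<or> \<not> hd t" unfolding t_def using hd_dropWhile[of "\<lambda>c. c" s] by (cases "dropWhile (\<lambda>c. c) s = []") auto
  have hs: "s = [] \<or> hd s" unfolding s_def using hd_dropWhile[of "\<lambda>c. \<not> c" r] by (cases "dropWhile (\<lambda>c. \<not> c) r = []") auto
  have "b = 0 \<longrightarrow> t = []"
  proof
    assume "b = 0"
    then have "takeWhile (\<lambda>c. c) s = []" using sb by simp
    then have "s = []" using hs by (cases s) auto
    then show "t = []" unfolding t_def by simp
  qed
  then show ?thesis using r a1 ht by blast
qed

lemma cnd_app:
  assumes "r \<noteq> []" "\<not> hd r" "True \<in> set r" "s = [] \<or> \<not> hd s"
  shows "cnd q (r @ s) = cnd q r"
proof -
  obtain a b t where r: "r = replicate a False @ replicate b True @ t" and a: "a \<ge> 1"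
    and t: "t = [] \<or> \<not> hd t" and bt: "b = 0 \<longrightarrow> t = []"
    using decomp[OF assms(1,2)] by blast
  have b: "b \<ge> 1" using assms(3) r bt by (cases b) auto
  have ts: "t @ s = [] \<or> \<not> hd (t @ s)" using t assms(4) by (cases t) auto
  have "cnd q (r @ s) = cnd q (replicate a False @ replicate b True @ (t @ s))" using r by simp
  also have "\<dots> = (b < q * a)" using cnd_explicit[OF a ts] b by simp
  also have "\<dots> = cnd q r" using cnd_explicit[OF a t bt] r by simp
  finally show ?thesis .
qed

definition vok :: "bool list \<Rightarrow> bool" where "vok v \<longleftrightarrow> v = [] \<or> last v"

lemma qdec_block:
  assumes "vok v" "a \<ge> 1"
  shows "q_decreasing q (v @ replicate a False @ replicate b True) \<longleftrightarrow> q_decreasing q v \<and> b < q * a"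
proof -
  let ?u = "replicate a False @ replicate b True"
  let ?w = "v @ ?u"
  have A: "(\<not> ?w ! i \<and> (i = 0 \<or> ?w ! (i - 1)) \<longrightarrow> cnd q (drop i ?w)) \<longleftrightarrow>
        (\<not> v ! i \<and> (i = 0 \<or> v ! (i - 1)) \<longrightarrow> cnd q (drop i v))" if i: "i < length v" for i
  proof -
    have e1: "?w ! i = v ! i" using i by (simp add: nth_append)
    have e2: "?w ! (i - 1) = v ! (i - 1)" by (metis i less_imp_diff_less nth_append)
    have e3: "drop i ?w = drop i v @ ?u" using i by simp
    have "cnd q (drop i v @ ?u) = cnd q (drop i v)" if "\<not> v ! i"
    proof (rule cnd_app)
      show "drop i v \<noteq> []" using i by simp
      show "\<not> hd (drop i v)" using i that by (simp add: hd_drop_conv_nth)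
      have "last v" using assms(1) i unfolding vok_def by auto
      moreover have "last (drop i v) = last v" using i by simp
      moreover have "drop i v \<noteq> []" using i by simp
      ultimately show "True \<in> set (drop i v)" by (metis last_in_set)
      show "?u = [] \<or> \<not> hd ?u" using assms(2) by (cases a) auto
    qed
    then show ?thesis using e1 e2 e3 by (cases "i = 0") auto
  qed
  have B: "(\<not> ?w ! i \<and> (i = 0 \<or> ?w ! (i - 1)) \<longrightarrow> cnd q (drop i ?w)) \<longleftrightarrow> b < q * a"
    if i: "i = length v" for i
  proof -
    have "\<not> ?w ! i" using i assms(2) by (simp add: nth_append)
    moreover have "i = 0 \<or> ?w ! (i - 1)"
    proof (cases "v = []")
      case True then show ?thesis using i by simp
    next
      case False
      then have "last v" using assms(1) unfolding vok_def by simp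
      moreover have "?w ! (i - 1) = v ! (length v - 1)" using i False by (simp add: nth_append)
      ultimately show ?thesis using False by (simp add: last_conv_nth)
    qed
    moreover have "cnd q (drop i ?w) = (b < q * a)" using i cnd_explicit[OF assms(2), of "[]" b q] by simp
    ultimately show ?thesis by simp
  qed
  have C: "(\<not> ?w ! i \<and> (i = 0 \<or> ?w ! (i - 1)) \<longrightarrow> cnd q (drop i ?w))"
    if i: "i > length v" "i < length ?w" for i
  proof (cases "i < length v + a")
    case True
    have j: "\<not> (i - 1 < length v)" using i by simp
    have "?w ! (i - 1) = ?u ! (i - 1 - length v)" using j by (simp only: nth_append if_False)
    also have "\<dots> = False" using True i by (simp add: nth_append)
    finally show ?thesis using i by simp
  next
    case False
    then have "?w ! i" using i by (simp add: nth_append)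
    then show ?thesis by simp
  qed
  show ?thesis
    unfolding qdec_alt
  proof (rule iffI)
    assume H: "\<forall>i<length ?w. \<not> ?w ! i \<and> (i = 0 \<or> ?w ! (i - 1)) \<longrightarrow> cnd q (drop i ?w)"
    have h1: "\<forall>i<length v. \<not> v ! i \<and> (i = 0 \<or> v ! (i - 1)) \<longrightarrow> cnd q (drop i v)"
    proof (intro allI impI)
      fix i assume i: "i < length v" and z: "\<not> v ! i \<and> (i = 0 \<or> v ! (i - 1))"
      have "i < length ?w" using i by simp
      then have "\<not> ?w ! i \<and> (i = 0 \<or> ?w ! (i - 1)) \<longrightarrow> cnd q (drop i ?w)" using H by blast
      then show "cnd q (drop i v)" using A[OF i] z by blast
    qed
    have "length v < length ?w" using assms(2) by simp
    then have "b < q * a" using H B[of "length v"] by blast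
    then show "(\<forall>i<length v. \<not> v ! i \<and> (i = 0 \<or> v ! (i - 1)) \<longrightarrow> cnd q (drop i v)) \<and> b < q * a"
      using h1 by blast
  next
    assume HH: "(\<forall>i<length v. \<not> v ! i \<and> (i = 0 \<or> v ! (i - 1)) \<longrightarrow> cnd q (drop i v)) \<and> b < q * a"
    then have H: "\<forall>i<length v. \<not> v ! i \<and> (i = 0 \<or> v ! (i - 1)) \<longrightarrow> cnd q (drop i v)" and b: "b < q * a" by auto
    show "\<forall>i<length ?w. \<not> ?w ! i \<and> (i = 0 \<or> ?w ! (i - 1)) \<longrightarrow> cnd q (drop i ?w)"
    proof (intro allI impI)
      fix i assume i: "i < length ?w" and z: "\<not> ?w ! i \<and> (i = 0 \<or> ?w ! (i - 1))"
      consider "i < length v" | "i = length v" | "i > length v" by linarith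
      then show "cnd q (drop i ?w)"
      proof cases
        case 1 then show ?thesis using A[OF 1] H z by auto
      next
        case 2 then show ?thesis using B[OF 2] b z by auto
      next
        case 3 then show ?thesis using C[OF 3 i] z by auto
      qed
    qed
  qed
qed

lemma qdec_allT: "q_decreasing q (replicate c True)"
  unfolding q_decreasing_def zero_run_start_def by auto

lemma form_exists:
  "(\<exists>c. u = replicate c True) \<or> (\<exists>v a b. vok v \<and> a \<ge> 1 \<and> u = v @ replicate a False @ replicate b True)"
proof (induction u rule: rev_induct)
  case Nil then show ?case by auto
next
  case (snoc x u)
  from snoc.IH show ?case
  proof
    assume "\<exists>c. u = replicate c True"
    then obtain c where c: "u = replicate c True" by blast
    show ?thesis
    proof (cases x)
      case True then have "u @ [x] = replicate (Suc c) True" using c by (simp add: replicate_append_same)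
      then show ?thesis by blast
    next
      case False
      have "vok u" using c unfolding vok_def by (cases c) auto
      moreover have "u @ [x] = u @ replicate 1 False @ replicate 0 True" using False by simp
      ultimately show ?thesis by blast
    qed
  next
    assume "\<exists>v a b. vok v \<and> a \<ge> 1 \<and> u = v @ replicate a False @ replicate b True"
    then obtain v a b where v: "vok v" "a \<ge> 1" "u = v @ replicate a False @ replicate b True" by blast
    show ?thesis
    proof (cases x)
      case True
      then have "u @ [x] = v @ replicate a False @ replicate (Suc b) True" using v(3)
        by (simp add: replicate_append_same)
      then show ?thesis using v by blast
    next
      case False
      show ?thesis
      proof (cases b)
        case 0
        then have "u @ [x] = v @ replicate (Suc a) False @ replicate 0 True" using v(3) False
          by (simp add: replicate_append_same)
        moreover have "Suc a \<ge> 1" by simp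
        ultimately show ?thesis using v by blast
      next
        case (Suc b')
        then have "last u" using v(3) by simp
        then have "vok u" unfolding vok_def by simp
        moreover have "u @ [x] = u @ replicate 1 False @ replicate 0 True" using False by simp
        ultimately show ?thesis by blast
      qed
    qed
  qed
qed

lemma form_unique:
  assumes "vok v" "vok v'" "a \<ge> 1" "a' \<ge> 1"
    and eq: "v @ replicate a False @ replicate b True = v' @ replicate a' False @ replicate b' True"
  shows "v = v' \<and> a = a' \<and> b = b'"
proof -
  have r: "replicate b True @ replicate a False @ rev v = replicate b' True @ replicate a' False @ rev v'"
    using arg_cong[OF eq, of rev] by simp
  have t1: "takeWhile (\<lambda>c. c) (replicate b True @ replicate a False @ rev v) = replicate b True"
    if "a \<ge> 1" for a b v by (simp add: tw_repT) (cases a, use that in auto)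
  have bb: "b = b'" using arg_cong[OF r, of "takeWhile (\<lambda>c. c)"] t1[OF assms(3), of b v] t1[OF assms(4), of b' v'] by simp
  then have r2: "replicate a False @ rev v = replicate a' False @ rev v'" using r by simp
  have t2: "takeWhile (\<lambda>c. \<not> c) (replicate a False @ rev v) = replicate a False" if "vok v" for a v
    using that unfolding vok_def by (simp add: tw_repF) (cases v rule: rev_cases, auto)
  have aa: "a = a'" using arg_cong[OF r2, of "takeWhile (\<lambda>c. \<not> c)"] t2[OF assms(1), of a] t2[OF assms(2), of a'] by simp
  then show ?thesis using r2 bb by simp
qed

context
  fixes q :: nat assumes q1: "q \<ge> 1"
begin

lemma qdec_snocF: "q_decreasing q (u @ [False]) = q_decreasing q u"
  using form_exists[of u]
proof
  assume "\<exists>c. u = replicate c True"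
  then obtain c where c: "u = replicate c True" by blast
  have "vok u" using c unfolding vok_def by (cases c) auto
  then have "q_decreasing q (u @ replicate 1 False @ replicate 0 True) = q_decreasing q u"
    using qdec_block[of u 1 q 0] q1 by simp
  then show ?thesis by simp
next
  assume "\<exists>v a b. vok v \<and> a \<ge> 1 \<and> u = v @ replicate a False @ replicate b True"
  then obtain v a b where v: "vok v" "a \<ge> 1" "u = v @ replicate a False @ replicate b True" by blast
  show ?thesis
  proof (cases b)
    case 0
    then have eq: "u @ [False] = v @ replicate (Suc a) False @ replicate 0 True" using v(3)
      by (simp add: replicate_append_same)
    have "q_decreasing q (u @ [False]) = q_decreasing q (v @ replicate (Suc a) False @ replicate 0 True)"
      using eq by simp
    also have "\<dots> = q_decreasing q v" using qdec_block[of v "Suc a" q 0] v q1 by simp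
    also have "\<dots> = q_decreasing q u" using qdec_block[of v a q 0] v q1 0 by simp
    finally show ?thesis .
  next
    case (Suc b')
    then have "last u" using v(3) by simp
    then have "vok u" unfolding vok_def by simp
    then have "q_decreasing q (u @ replicate 1 False @ replicate 0 True) = q_decreasing q u"
      using qdec_block[of u 1 q 0] q1 by simp
    then show ?thesis by simp
  qed
qed

lemma good_imp: "q_decreasing q (u @ [True]) \<Longrightarrow> q_decreasing q u"
  using form_exists[of u]
proof
  assume "\<exists>c. u = replicate c True"
  then show ?thesis using qdec_allT by blast
next
  assume H: "q_decreasing q (u @ [True])"
  assume "\<exists>v a b. vok v \<and> a \<ge> 1 \<and> u = v @ replicate a False @ replicate b True"
  then obtain v a b where v: "vok v" "a \<ge> 1" "u = v @ replicate a False @ replicate b True" by blast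
  have "u @ [True] = v @ replicate a False @ replicate (Suc b) True" using v(3)
    by (simp add: replicate_append_same)
  then have "q_decreasing q v \<and> Suc b < q * a" using H qdec_block[OF v(1,2), of q "Suc b"] by simp
  then show ?thesis using qdec_block[OF v(1,2), of q b] v(3) by simp
qed

lemma bad_char:
  "(q_decreasing q u \<and> \<not> q_decreasing q (u @ [True])) \<longleftrightarrow>
   (\<exists>v a. vok v \<and> a \<ge> 1 \<and> q_decreasing q v \<and> u = v @ replicate a False @ replicate (q * a - 1) True)"
proof
  assume H: "q_decreasing q u \<and> \<not> q_decreasing q (u @ [True])"
  show "\<exists>v a. vok v \<and> a \<ge> 1 \<and> q_decreasing q v \<and> u = v @ replicate a False @ replicate (q * a - 1) True"
    using form_exists[of u]
  proof
    assume "\<exists>c. u = replicate c True"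
    then obtain c where "u = replicate c True" by blast
    then have "u @ [True] = replicate (Suc c) True" by (simp add: replicate_append_same)
    then show ?thesis using H qdec_allT by metis
  next
    assume "\<exists>v a b. vok v \<and> a \<ge> 1 \<and> u = v @ replicate a False @ replicate b True"
    then obtain v a b where v: "vok v" "a \<ge> 1" "u = v @ replicate a False @ replicate b True" by blast
    have "u @ [True] = v @ replicate a False @ replicate (Suc b) True" using v(3)
      by (simp add: replicate_append_same)
    then have "\<not> (q_decreasing q v \<and> Suc b < q * a)" using H qdec_block[OF v(1,2), of q "Suc b"] by simp
    moreover have "q_decreasing q v \<and> b < q * a" using H qdec_block[OF v(1,2), of q b] v(3) by simp
    ultimately have "b = q * a - 1" "q_decreasing q v" by auto
    then show ?thesis using v by blast
  qed
next
  assume "\<exists>v a. vok v \<and> a \<ge> 1 \<and> q_decreasing q v \<and> u = v @ replicate a False @ replicate (q * a - 1) True"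
  then obtain v a where v: "vok v" "a \<ge> 1" "q_decreasing q v" "u = v @ replicate a False @ replicate (q * a - 1) True" by blast
  have qa: "q * a \<ge> 1" using q1 v(2) by simp
  have "u @ [True] = v @ replicate a False @ replicate (Suc (q * a - 1)) True" using v(4)
    by (simp add: replicate_append_same)
  then have "\<not> q_decreasing q (u @ [True])" using qdec_block[OF v(1,2), of q "Suc (q * a - 1)"] qa by simp
  moreover have "q_decreasing q u" using qdec_block[OF v(1,2), of q "q * a - 1"] v qa by simp
  ultimately show "q_decreasing q u \<and> \<not> q_decreasing q (u @ [True])" by blast
qed

end

definition SS :: "nat \<Rightarrow> nat \<Rightarrow> nat \<Rightarrow> bool list set" where
  "SS q n k = {w. length w = n \<and> length (filter (\<lambda>c. c) w) = k \<and> q_decreasing q w}"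
definition Gd :: "nat \<Rightarrow> nat \<Rightarrow> nat \<Rightarrow> bool list set" where
  "Gd q n k = {w \<in> SS q n k. q_decreasing q (w @ [True])}"
definition Bd :: "nat \<Rightarrow> nat \<Rightarrow> nat \<Rightarrow> bool list set" where
  "Bd q n k = {w \<in> SS q n k. \<not> q_decreasing q (w @ [True])}"
definition PP :: "nat \<Rightarrow> nat \<Rightarrow> nat \<Rightarrow> (bool list \<times> nat) set" where
  "PP q n k = {(v, a). vok v \<and> a \<ge> 1 \<and> q_decreasing q v \<and> length v + a + (q * a - 1) = n
      \<and> length (filter (\<lambda>c. c) v) + (q * a - 1) = k}"

lemma w_count_SS: "w_count q n k = card (SS q n k)"
  unfolding w_count_def SS_def by simp

lemma finite_SS: "finite (SS q n k)"
proof -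
  have "finite {xs :: bool list. length xs = n}" using finite_lists_length_eq[of "UNIV :: bool set" n] by simp
  moreover have "SS q n k \<subseteq> {xs :: bool list. length xs = n}" unfolding SS_def by blast
  ultimately show ?thesis by (rule finite_subset[rotated])
qed

lemma finite_PP: "finite (PP q n k)"
proof -
  have "finite {xs :: bool list. length xs \<le> n}" using finite_lists_length_le[of "UNIV :: bool set" n] by simp
  then have "finite ({xs :: bool list. length xs \<le> n} \<times> {..n})" by blast
  moreover have "PP q n k \<subseteq> {xs :: bool list. length xs \<le> n} \<times> {..n}" unfolding PP_def by auto
  ultimately show ?thesis by (rule finite_subset[rotated])
qed

lemma qdec_Nil: "q_decreasing q []"
  unfolding q_decreasing_def zero_run_start_def by simp

lemma SS_0: "SS q 0 k = (if k = 0 then {[]} else {})"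
  unfolding SS_def using qdec_Nil by auto

context
  fixes q :: nat assumes q1: "q \<ge> 1"
begin

lemma SS_Suc_0: "SS q (Suc n) 0 = (\<lambda>u. u @ [False]) ` SS q n 0"
proof
  show "SS q (Suc n) 0 \<subseteq> (\<lambda>u. u @ [False]) ` SS q n 0"
  proof
    fix w assume w: "w \<in> SS q (Suc n) 0"
    then have "w \<noteq> []" unfolding SS_def by auto
    then obtain u x where ux: "w = u @ [x]" by (metis rev_exhaust)
    then have "\<not> x" using w unfolding SS_def by auto
    then show "w \<in> (\<lambda>u. u @ [False]) ` SS q n 0"
      using w ux qdec_snocF[OF q1, of u] unfolding SS_def by auto
  qed
next
  show "(\<lambda>u. u @ [False]) ` SS q n 0 \<subseteq> SS q (Suc n) 0"
    using qdec_snocF[OF q1] unfolding SS_def by auto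
qed

lemma SS_Suc_Suc: "SS q (Suc n) (Suc k) = (\<lambda>u. u @ [False]) ` SS q n (Suc k) \<union> (\<lambda>u. u @ [True]) ` Gd q n k"
proof
  show "SS q (Suc n) (Suc k) \<subseteq> (\<lambda>u. u @ [False]) ` SS q n (Suc k) \<union> (\<lambda>u. u @ [True]) ` Gd q n k"
  proof
    fix w assume w: "w \<in> SS q (Suc n) (Suc k)"
    then have "w \<noteq> []" unfolding SS_def by auto
    then obtain u x where ux: "w = u @ [x]" by (metis rev_exhaust)
    show "w \<in> (\<lambda>u. u @ [False]) ` SS q n (Suc k) \<union> (\<lambda>u. u @ [True]) ` Gd q n k"
    proof (cases x)
      case True
      then have "u \<in> Gd q n k" using w ux good_imp[OF q1, of u] unfolding SS_def Gd_def by auto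
      then show ?thesis using ux True by auto
    next
      case False
      then have "u \<in> SS q n (Suc k)" using w ux qdec_snocF[OF q1, of u] unfolding SS_def by auto
      then show ?thesis using ux False by auto
    qed
  qed
next
  show "(\<lambda>u. u @ [False]) ` SS q n (Suc k) \<union> (\<lambda>u. u @ [True]) ` Gd q n k \<subseteq> SS q (Suc n) (Suc k)"
    using qdec_snocF[OF q1] unfolding SS_def Gd_def by auto
qed

lemma card_SS_Suc_0: "card (SS q (Suc n) 0) = card (SS q n 0)"
  unfolding SS_Suc_0 by (rule card_image) (auto simp: inj_on_def)

lemma card_SS_split: "card (SS q n k) = card (Gd q n k) + card (Bd q n k)"
proof -
  have "SS q n k = Gd q n k \<union> Bd q n k" "Gd q n k \<inter> Bd q n k = {}" unfolding Gd_def Bd_def by auto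
  moreover have "finite (Gd q n k)" "finite (Bd q n k)" using finite_SS unfolding Gd_def Bd_def by auto
  ultimately show ?thesis by (simp add: card_Un_disjoint)
qed

lemma card_SS_Suc_Suc: "card (SS q (Suc n) (Suc k)) = card (SS q n (Suc k)) + card (Gd q n k)"
proof -
  have f1: "finite ((\<lambda>u. u @ [False]) ` SS q n (Suc k))" using finite_SS by auto
  have f2: "finite ((\<lambda>u. u @ [True]) ` Gd q n k)" using finite_SS unfolding Gd_def by auto
  have d: "(\<lambda>u. u @ [False]) ` SS q n (Suc k) \<inter> (\<lambda>u. u @ [True]) ` Gd q n k = {}" by auto
  have c1: "card ((\<lambda>u. u @ [False]) ` SS q n (Suc k)) = card (SS q n (Suc k))"
    by (rule card_image) (auto simp: inj_on_def)
  have c2: "card ((\<lambda>u. u @ [True]) ` Gd q n k) = card (Gd q n k)"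
    by (rule card_image) (auto simp: inj_on_def)
  show ?thesis unfolding SS_Suc_Suc using card_Un_disjoint[OF f1 f2 d] c1 c2 by simp
qed

definition fblk :: "bool list \<times> nat \<Rightarrow> bool list" where
  "fblk = (\<lambda>(v, a). v @ replicate a False @ replicate (q * a - 1) True)"

lemma Bd_eq: "Bd q n k = fblk ` PP q n k"
proof
  show "Bd q n k \<subseteq> fblk ` PP q n k"
  proof
    fix u assume u: "u \<in> Bd q n k"
    then obtain v a where v: "vok v" "a \<ge> 1" "q_decreasing q v" "u = v @ replicate a False @ replicate (q * a - 1) True"
      using bad_char[OF q1, of u] unfolding Bd_def SS_def by auto
    then have "(v, a) \<in> PP q n k" using u unfolding PP_def Bd_def SS_def by auto
    then show "u \<in> fblk ` PP q n k" using v(4) unfolding fblk_def by force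
  qed
next
  show "fblk ` PP q n k \<subseteq> Bd q n k"
  proof
    fix u assume "u \<in> fblk ` PP q n k"
    then obtain v a where va: "(v, a) \<in> PP q n k" "u = v @ replicate a False @ replicate (q * a - 1) True"
      unfolding fblk_def by auto
    then have "q_decreasing q u \<and> \<not> q_decreasing q (u @ [True])"
      using bad_char[OF q1, of u] unfolding PP_def by blast
    then show "u \<in> Bd q n k" using va unfolding Bd_def SS_def PP_def by auto
  qed
qed

lemma card_Bd_PP: "card (Bd q n k) = card (PP q n k)"
  unfolding Bd_eq
proof (rule card_image)
  show "inj_on fblk (PP q n k)"
  proof (rule inj_onI)
    fix x y assume "x \<in> PP q n k" "y \<in> PP q n k" "fblk x = fblk y"
    moreover obtain v a where "x = (v, a)" by fastforce
    moreover obtain v' a' where "y = (v', a')" by fastforce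
    ultimately show "x = y" using form_unique[of v v' a a' "q * a - 1" "q * a' - 1"]
      unfolding PP_def fblk_def by auto
  qed
qed


lemma PP_step: "PP q (n + q + 1) (k + q) = (\<lambda>(v, a). (v, Suc a)) ` PP q n k \<union> (\<lambda>v. (v @ [True], 1::nat)) ` Gd q n k"
proof
  show "PP q (n + q + 1) (k + q) \<subseteq> (\<lambda>(v, a). (v, Suc a)) ` PP q n k \<union> (\<lambda>v. (v @ [True], 1::nat)) ` Gd q n k"
  proof
    fix x assume x: "x \<in> PP q (n + q + 1) (k + q)"
    obtain v a where xa: "x = (v, a)" by fastforce
    have v: "vok v" "a \<ge> 1" "q_decreasing q v" "length v + a + (q * a - 1) = n + q + 1"
      "length (filter (\<lambda>c. c) v) + (q * a - 1) = k + q" using x unfolding xa PP_def by auto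
    show "x \<in> (\<lambda>(v, a). (v, Suc a)) ` PP q n k \<union> (\<lambda>v. (v @ [True], 1::nat)) ` Gd q n k"
    proof (cases "a = 1")
      case True
      then have l: "length v = n + 1" "length (filter (\<lambda>c. c) v) = k + 1" using v q1 by auto
      then have "v \<noteq> []" by auto
      then obtain v' where v': "v = v' @ [True]" using v(1) unfolding vok_def
        by (metis append_butlast_last_id)
      have "v' \<in> Gd q n k" using l v(3) good_imp[OF q1, of v'] unfolding v' Gd_def SS_def by auto
      then show ?thesis using xa True v' by auto
    next
      case False
      then obtain a' where a': "a = Suc a'" "a' \<ge> 1" using v(2) by (cases a) auto
      have qa: "q * a' \<ge> 1" using q1 a'(2) by simp
      have "q * a - 1 = (q * a' - 1) + q" using qa a'(1) by simp
      then have "(v, a') \<in> PP q n k" using v a' unfolding PP_def by auto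
      then show ?thesis using xa a' by force
    qed
  qed
next
  show "(\<lambda>(v, a). (v, Suc a)) ` PP q n k \<union> (\<lambda>v. (v @ [True], 1::nat)) ` Gd q n k \<subseteq> PP q (n + q + 1) (k + q)"
  proof (rule Un_least)
    show "(\<lambda>(v, a). (v, Suc a)) ` PP q n k \<subseteq> PP q (n + q + 1) (k + q)"
    proof
      fix x assume "x \<in> (\<lambda>(v, a). (v, Suc a)) ` PP q n k"
      then obtain v a where x: "x = (v, Suc a)" and va: "(v, a) \<in> PP q n k" by auto
      have v: "vok v" "a \<ge> 1" "q_decreasing q v" "length v + a + (q * a - 1) = n"
        "length (filter (\<lambda>c. c) v) + (q * a - 1) = k" using va unfolding PP_def by auto
      have qa: "q * a \<ge> 1" using q1 v(2) by simp
      have "q * Suc a - 1 = (q * a - 1) + q" using qa by simp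
      then show "x \<in> PP q (n + q + 1) (k + q)" using v unfolding x PP_def by auto
    qed
    show "(\<lambda>v. (v @ [True], 1::nat)) ` Gd q n k \<subseteq> PP q (n + q + 1) (k + q)"
    proof
      fix x assume "x \<in> (\<lambda>v. (v @ [True], 1::nat)) ` Gd q n k"
      then obtain v where x: "x = (v @ [True], 1::nat)" and v: "v \<in> Gd q n k" by auto
      have "vok (v @ [True])" unfolding vok_def by simp
      then show "x \<in> PP q (n + q + 1) (k + q)" using v q1 unfolding x PP_def Gd_def SS_def by auto
    qed
  qed
qed

lemma card_PP_step: "card (PP q (n + q + 1) (k + q)) = card (PP q n k) + card (Gd q n k)"
proof -
  have f1: "finite ((\<lambda>(v, a). (v, Suc a)) ` PP q n k)" using finite_PP by blast
  have f2: "finite ((\<lambda>v. (v @ [True], 1::nat)) ` Gd q n k)"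
    using finite_SS[of q n k] unfolding Gd_def by simp
  have d: "(\<lambda>(v, a). (v, Suc a)) ` PP q n k \<inter> (\<lambda>v. (v @ [True], 1::nat)) ` Gd q n k = {}"
    unfolding PP_def by auto
  have c1: "card ((\<lambda>(v, a). (v, Suc a)) ` PP q n k) = card (PP q n k)"
    by (rule card_image) (auto simp: inj_on_def)
  have c2: "card ((\<lambda>v. (v @ [True], 1::nat)) ` Gd q n k) = card (Gd q n k)"
    by (rule card_image) (auto simp: inj_on_def)
  show ?thesis unfolding PP_step using card_Un_disjoint[OF f1 f2 d] c1 c2 by simp
qed

lemma PP_small:
  assumes "\<not> (q + 1 \<le> m \<and> q \<le> j)"
  shows "card (PP q m j) = (if m = q \<and> j = q - 1 then 1 else 0)"
proof -
  have sub: "PP q m j \<subseteq> {([], 1)}"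
  proof
    fix x assume x: "x \<in> PP q m j"
    obtain v a where xa: "x = (v, a)" by fastforce
    have v: "vok v" "a \<ge> 1" "length v + a + (q * a - 1) = m"
      "length (filter (\<lambda>c. c) v) + (q * a - 1) = j" using x unfolding xa PP_def by auto
    have qa: "q * a \<ge> q" using v(2) by simp
    have vn: "v = []"
    proof (rule ccontr)
      assume "v \<noteq> []"
      then have "True \<in> set v" using v(1) unfolding vok_def by (metis last_in_set)
      then have "filter (\<lambda>c. c) v \<noteq> []" by (metis (mono_tags) filter_empty_conv)
      then have "length (filter (\<lambda>c. c) v) \<ge> 1" by (cases "filter (\<lambda>c. c) v") auto
      moreover have "length v \<ge> 1" using \<open>v \<noteq> []\<close> by (cases v) auto
      ultimately show False using v qa assms q1 by linarith
    qed
    have "a = 1"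
    proof (rule ccontr)
      assume "a \<noteq> 1"
      then have "a \<ge> 2" using v(2) by simp
      then have "q * a \<ge> 2 * q" by simp
      then show False using v vn assms q1 by linarith
    qed
    then show "x \<in> {([], 1)}" using xa vn by simp
  qed
  have mem: "([], 1) \<in> PP q m j \<longleftrightarrow> m = q \<and> j = q - 1"
    using q1 unfolding PP_def vok_def by (auto simp: qdec_Nil)
  show ?thesis
  proof (cases "m = q \<and> j = q - 1")
    case True
    then have "PP q m j = {([], 1)}" using sub mem by blast
    then show ?thesis using True by simp
  next
    case False
    then have "PP q m j = {}" using sub mem by blast
    then show ?thesis using False by simp
  qed
qed

lemma card_Bd: "card (Bd q m j) = (if q + 1 \<le> m \<and> q \<le> j then card (SS q (m - q - 1) (j - q))
                                   else if m = q \<and> j = q - 1 then 1 else 0)"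
proof (cases "q + 1 \<le> m \<and> q \<le> j")
  case True
  define n where "n = m - q - 1"
  define k where "k = j - q"
  have mj: "m = n + q + 1" "j = k + q" using True unfolding n_def k_def by auto
  have "card (Bd q m j) = card (PP q n k) + card (Gd q n k)" unfolding card_Bd_PP mj card_PP_step ..
  also have "\<dots> = card (SS q n k)" using card_SS_split[of n k] card_Bd_PP[of n k] by simp
  finally show ?thesis using True unfolding n_def k_def by simp
next
  case False
  have "card (Bd q m j) = card (PP q m j)" by (rule card_Bd_PP)
  then show ?thesis using PP_small[OF False] False by auto
qed


lemma main_rec:
  "int (card (SS q n k)) - (if 1 \<le> n \<and> 1 \<le> k then int (card (SS q (n - 1) (k - 1))) else 0)
     - (if 1 \<le> n then int (card (SS q (n - 1) k)) else 0)
     + (if q + 2 \<le> n \<and> q + 1 \<le> k then int (card (SS q (n - q - 2) (k - q - 1))) else 0)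
   = (if n = 0 \<and> k = 0 then 1 else 0) - (if n = q + 1 \<and> k = q then 1 else 0)"
proof (cases n)
  case 0
  then show ?thesis using q1 by (simp add: SS_0)
next
  case (Suc n')
  show ?thesis
  proof (cases k)
    case 0
    then show ?thesis using Suc q1 card_SS_Suc_0[of n'] by simp
  next
    case (Suc k')
    have e1: "card (SS q n k) = card (SS q n' k) + card (Gd q n' k')"
      using card_SS_Suc_Suc[of n' k'] \<open>n = Suc n'\<close> Suc by simp
    have e2: "card (SS q n' k') = card (Gd q n' k') + card (Bd q n' k')" by (rule card_SS_split)
    have e3: "card (Bd q n' k') = (if q + 1 \<le> n' \<and> q \<le> k' then card (SS q (n' - q - 1) (k' - q))
                                   else if n' = q \<and> k' = q - 1 then 1 else 0)" by (rule card_Bd)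
    have c1: "(q + 2 \<le> n \<and> q + 1 \<le> k) = (q + 1 \<le> n' \<and> q \<le> k')" using \<open>n = Suc n'\<close> Suc by simp
    have c2: "(n = q + 1 \<and> k = q) = (n' = q \<and> k' = q - 1)" using \<open>n = Suc n'\<close> Suc q1 by auto
    have c3: "n - q - 2 = n' - q - 1" "k - q - 1 = k' - q" using \<open>n = Suc n'\<close> Suc by auto
    show ?thesis using e1 e2 e3 c1 c2 c3 \<open>n = Suc n'\<close> Suc by auto
  qed
qed

end

lemma W_expand:
  fixes W :: "int fps fps"
  shows "W * (1 - X_var * Y_var - X_var + X_var ^ (q + 2) * Y_var ^ (q + 1)) =
    W - fps_X * (fps_const fps_X * W) - fps_X * W + fps_X ^ (q + 2) * (fps_const (fps_X ^ (q + 1)) * W)"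
proof -
  have "Y_var ^ (q + 1) = fps_const (fps_X ^ (q + 1))" by (rule fps_const_power)
  then show ?thesis by (simp add: algebra_simps)
qed

theorem theorem2:
  fixes q :: nat
  assumes "q \<ge> 1"
  shows "W_gf q * (1 - X_var * Y_var - X_var + X_var ^ (q + 2) * Y_var ^ (q + 1))
           = 1 - X_var ^ (q + 1) * Y_var ^ q"
proof (rule fps_ext)
  fix n
  show "fps_nth (W_gf q * (1 - X_var * Y_var - X_var + X_var ^ (q + 2) * Y_var ^ (q + 1))) n
        = fps_nth (1 - X_var ^ (q + 1) * Y_var ^ q) n"
  proof (rule fps_ext)
    fix k
    note R = main_rec[OF assms, of n k]
    show "fps_nth (fps_nth (W_gf q * (1 - X_var * Y_var - X_var + X_var ^ (q + 2) * Y_var ^ (q + 1))) n) k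
        = fps_nth (fps_nth (1 - X_var ^ (q + 1) * Y_var ^ q) n) k"
      unfolding W_expand
      apply (simp only: fps_sub_nth fps_add_nth fps_X_mult_nth fps_X_power_mult_nth fps_mult_left_const_nth
         fps_one_nth if_distrib[of "\<lambda>x. fps_nth x k"] fps_zero_nth)
      apply (simp only: fps_sub_nth fps_add_nth fps_X_mult_nth fps_X_power_mult_nth fps_mult_left_const_nth
         fps_one_nth if_distrib[of "\<lambda>x. fps_nth x k"] fps_zero_nth fps_const_power fps_nth_fps_const)
      apply (simp only: fps_X_power_nth if_distrib[of "\<lambda>x. fps_nth x k"] fps_zero_nth)
      using R assms by (auto simp: W_gf_def w_count_SS)
  qed
qed

end
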